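(* For every $n\ge 1$, the symmetric group $S_n$ has a mixing sequence consisting of involutions of length at most $\frac{3}{2}\lfloor\log_2(n!)\rfloor+\frac{1}{2}n$; in particular $\mathrm{mixlen}(S_n)\le \frac{3}{2}\lfloor\log_2(n!)\rfloor+\frac{1}{2}n$.
   Context: For a finite group $G$, a random subproduct is a random element $g_1^{\epsilon_1}\cdots g_k^{\epsilon_k}$ where $g_1,\dots,g_k\in G$ are fixed and $\epsilon_1,\dots,\epsilon_k$ are independent Bernoulli random variables with $\epsilon_i\sim\mathrm{Ber}(p_i)$, $p_i\in[0,1]$. If such a random subproduct is distributed exactly uniformly on $G$, then $(g_1,p_1),\dots,(g_k,p_k)$ is a mixing sequence of $G$ of length $k$, and $G$ is mixable. The mixing length $\mathrm{mixlen}(G)$ is the minimal length of a mixing sequence of $G$. *)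

theory Defs
  imports "HOL-Algebra.Sym_Groups" "HOL-Probability.Probability_Mass_Function"
begin

definition random_subproduct :: "('a, 'b) monoid_scheme \<Rightarrow> ('a \<times> real) list \<Rightarrow> 'a pmf" where
  "random_subproduct G s =
     foldl (\<lambda>M (g, p). bind_pmf M (\<lambda>h. map_pmf (\<lambda>e. if e then h \<otimes>\<^bsub>G\<^esub> g else h) (bernoulli_pmf p)))
           (return_pmf \<one>\<^bsub>G\<^esub>) s"

definition mixing_seq :: "('a, 'b) monoid_scheme \<Rightarrow> ('a \<times> real) list \<Rightarrow> bool" where
  "mixing_seq G s \<longleftrightarrow>
     (\<forall>(g, p) \<in> set s. g \<in> carrier G \<and> 0 \<le> p \<and> p \<le> 1) \<and>
     random_subproduct G s = pmf_of_set (carrier G)"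

definition mixlen :: "('a, 'b) monoid_scheme \<Rightarrow> nat" where
  "mixlen G = (LEAST k. \<exists>s. mixing_seq G s \<and> length s = k)"

definition involution :: "('a, 'b) monoid_scheme \<Rightarrow> 'a \<Rightarrow> bool" where
  "involution G g \<longleftrightarrow> g \<in> carrier G \<and> g \<noteq> \<one>\<^bsub>G\<^esub> \<and> g \<otimes>\<^bsub>G\<^esub> g = \<one>\<^bsub>G\<^esub>"

end

theory Submission
  imports Defs
begin

definition walk :: "nat pmf \<Rightarrow> ((nat \<Rightarrow> nat) \<times> real) list \<Rightarrow> nat pmf" where
  "walk M s = foldl (\<lambda>M (t, p). bind_pmf M (\<lambda>x. map_pmf (\<lambda>e. if e then t x else x) (bernoulli_pmf p))) M s"

definition rs0 :: "(nat \<Rightarrow> nat) pmf \<Rightarrow> ((nat \<Rightarrow> nat) \<times> real) list \<Rightarrow> (nat \<Rightarrow> nat) pmf" where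
  "rs0 M s = foldl (\<lambda>M (g, p). bind_pmf M (\<lambda>h. map_pmf (\<lambda>e. if e then h \<circ> g else h) (bernoulli_pmf p))) M s"

lemma rsp_sym: "random_subproduct (sym_group n) s = rs0 (return_pmf id) s"
  proof -
  have m: "\<And>h g. h \<otimes>\<^bsub>sym_group n\<^esub> g = h \<circ> g" by (simp add: sym_group_mult)
  show ?thesis by (simp add: random_subproduct_def rs0_def m sym_group_one cong: if_cong)
qed

lemma walk_Nil[simp]: "walk M [] = M" by (simp add: walk_def)
lemma walk_Cons[simp]: "walk M ((t,p)#s) = walk (bind_pmf M (\<lambda>x. map_pmf (\<lambda>e. if e then t x else x) (bernoulli_pmf p))) s"
  by (simp add: walk_def)
lemma walk_append: "walk M (xs @ ys) = walk (walk M xs) ys" by (simp add: walk_def)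

lemma rs0_Nil[simp]: "rs0 M [] = M" by (simp add: rs0_def)
lemma rs0_Cons[simp]: "rs0 M ((t,p)#s) = rs0 (bind_pmf M (\<lambda>h. map_pmf (\<lambda>e. if e then h \<circ> t else h) (bernoulli_pmf p))) s"
  by (simp add: rs0_def)
lemma rs0_append: "rs0 M (xs @ ys) = rs0 (rs0 M xs) ys" by (simp add: rs0_def)

lemma walk_bind: "walk M s = bind_pmf M (\<lambda>x. walk (return_pmf x) s)"
proof (induction s arbitrary: M)
  case Nil
  then show ?case by (simp add: bind_return_pmf')
next
  case (Cons a s)
  obtain t p where a: "a = (t,p)" by fastforce
  show ?case unfolding a walk_Cons
    by (subst Cons.IH, subst (2) Cons.IH) (simp add: bind_assoc_pmf bind_return_pmf)
qed

lemma walk_fix: "(\<forall>(t,p)\<in>set s. t x = x) \<Longrightarrow> walk (return_pmf x) s = return_pmf x"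
proof (induction s)
  case Nil
  then show ?case by simp
next
  case (Cons a s)
  obtain t p where a: "a = (t,p)" by fastforce
  have "t x = x" using Cons.prems a by auto
  then show ?case using Cons unfolding a by (simp add: bind_return_pmf map_pmf_const cong: if_cong)
qed

definition swp :: "nat \<Rightarrow> nat \<Rightarrow> nat \<Rightarrow> nat" where
  "swp lo a u = (if lo \<le> u \<and> u < lo + a then u + a else if lo + a \<le> u \<and> u < lo + 2*a then u - a else u)"

function wl :: "nat \<Rightarrow> nat \<Rightarrow> ((nat \<Rightarrow> nat) \<times> real) list" where
  "wl lo k = (if k \<le> 1 then [] else if even k then wl (lo + k div 2) (k div 2) @ [(swp lo (k div 2), 1/2)]
     else (swp (lo + k - 2) 1, (real k - 1) / real k) # wl lo (k - 1))"
  by pat_completeness auto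
termination by (relation "Wellfounded.measure snd") auto

declare wl.simps[simp del]

lemma swp_invol: "swp lo a \<circ> swp lo a = id"
  by (rule ext) (auto simp: swp_def)

lemma swp_ne: "a \<ge> 1 \<Longrightarrow> swp lo a \<noteq> id"
proof
  assume "a \<ge> 1" "swp lo a = id"
  then have "swp lo a lo = lo" by simp
  with \<open>a \<ge> 1\<close> show False by (simp add: swp_def)
qed

lemma swp_out: "u < lo \<or> lo + 2*a \<le> u \<Longrightarrow> swp lo a u = u"
  by (auto simp: swp_def)

lemma wl_props: "\<forall>(t,p)\<in>set (wl lo k). t \<circ> t = id \<and> t \<noteq> id \<and> (\<forall>u. u < lo \<or> lo + k \<le> u \<longrightarrow> t u = u) \<and> 0 \<le> p \<and> p \<le> 1"
proof (induction lo k rule: wl.induct)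
  case (1 lo k)
  show ?case
  proof (cases "k \<le> 1")
    case True
    then show ?thesis by (simp add: wl.simps)
  next
    case False
    show ?thesis
    proof (cases "even k")
      case True
      have IH: "\<forall>(t,p)\<in>set (wl (lo + k div 2) (k div 2)). t \<circ> t = id \<and> t \<noteq> id \<and> (\<forall>u. u < lo + k div 2 \<or> lo + k div 2 + k div 2 \<le> u \<longrightarrow> t u = u) \<and> 0 \<le> p \<and> p \<le> 1"
        using 1 False True by blast
      have kk: "lo + k div 2 + k div 2 = lo + k" using True by auto
      show ?thesis
        using IH False True swp_invol[of lo "k div 2"] swp_ne[of "k div 2" lo] swp_out[of _ lo "k div 2"]
        by (subst wl.simps) (fastforce simp: kk)
    next
      case odd: False
      have IH: "\<forall>(t,p)\<in>set (wl lo (k - 1)). t \<circ> t = id \<and> t \<noteq> id \<and> (\<forall>u. u < lo \<or> lo + (k - 1) \<le> u \<longrightarrow> t u = u) \<and> 0 \<le> p \<and> p \<le> 1"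
        using 1 False odd by blast
      have "(\<forall>u. u < lo \<or> lo + k \<le> u \<longrightarrow> swp (lo + k - 2) 1 u = u)"
        using False by (auto simp: swp_def)
      moreover have "0 \<le> (real k - 1) / real k" "(real k - 1) / real k \<le> 1" using False by auto
      ultimately show ?thesis
        using IH False odd swp_invol[of "lo + k - 2" 1] swp_ne[of 1 "lo + k - 2"]
        by (subst wl.simps) fastforce
    qed
  qed
qed

lemma bern_half_map:
  assumes "u \<noteq> v"
  shows "map_pmf (\<lambda>e. if e then u else v) (bernoulli_pmf (1/2)) = pmf_of_set {u, v}"
proof -
  have "inj_on (\<lambda>e. if e then u else v) UNIV" using assms by (auto simp: inj_on_def split: if_splits)
  then have "map_pmf (\<lambda>e. if e then u else v) (pmf_of_set UNIV) = pmf_of_set ((\<lambda>e. if e then u else v) ` UNIV)"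
    by (intro map_pmf_of_set_inj) auto
  moreover have "(\<lambda>e. if e then u else v) ` UNIV = {u, v}" by (auto simp: UNIV_bool)
  ultimately show ?thesis by (simp add: bernoulli_pmf_half_conv_pmf_of_set)
qed

lemma even_step:
  assumes "a \<ge> 1"
  shows "bind_pmf (pmf_of_set {lo+a..<lo+2*a}) (\<lambda>x. map_pmf (\<lambda>e. if e then swp lo a x else x) (bernoulli_pmf (1/2)))
         = pmf_of_set {lo..<lo+2*a}"
proof -
  define f where "f x = {x - a, x}" for x
  have sw: "swp lo a x = x - a" if "x \<in> {lo+a..<lo+2*a}" for x using that by (auto simp: swp_def)
  have "bind_pmf (pmf_of_set {lo+a..<lo+2*a}) (\<lambda>x. map_pmf (\<lambda>e. if e then swp lo a x else x) (bernoulli_pmf (1/2)))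
      = bind_pmf (pmf_of_set {lo+a..<lo+2*a}) (\<lambda>x. pmf_of_set (f x))"
  proof (rule bind_pmf_cong[OF refl])
    fix x assume "x \<in> set_pmf (pmf_of_set {lo+a..<lo+2*a})"
    then have x: "x \<in> {lo+a..<lo+2*a}" using assms by (subst (asm) set_pmf_of_set) auto
    then show "map_pmf (\<lambda>e. if e then swp lo a x else x) (bernoulli_pmf (1/2)) = pmf_of_set (f x)"
    proof -
      have e: "swp lo a x = x - a" using sw x by blast
      have "x - a \<noteq> x" using x assms by auto
      then show ?thesis unfolding e f_def by (rule bern_half_map)
    qed
  qed
  also have "\<dots> = pmf_of_set (\<Union>(f ` {lo+a..<lo+2*a}))"
  proof (rule pmf_of_set_UN[symmetric, where n = 2])
    show "finite (\<Union>(f ` {lo+a..<lo+2*a}))" by (simp add: f_def)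
    show "{lo+a..<lo+2*a} \<noteq> {}" using assms by auto
    show "\<And>x. x \<in> {lo+a..<lo+2*a} \<Longrightarrow> f x \<noteq> {}" by (simp add: f_def)
    show "\<And>x. x \<in> {lo+a..<lo+2*a} \<Longrightarrow> card (f x) = 2" using assms by (auto simp: f_def)
    show "disjoint_family_on f {lo+a..<lo+2*a}" unfolding disjoint_family_on_def f_def by auto
  qed
  also have "\<Union>(f ` {lo+a..<lo+2*a}) = {lo..<lo+2*a}"
  proof -
    have "y \<in> \<Union>(f ` {lo+a..<lo+2*a})" if y: "y \<in> {lo..<lo+2*a}" for y
    proof (cases "y < lo + a")
      case True
      then have "y + a \<in> {lo+a..<lo+2*a}" "y \<in> f (y + a)" using y by (auto simp: f_def)
      then show ?thesis by blast
    next
      case False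
      then have "y \<in> {lo+a..<lo+2*a}" "y \<in> f y" using y by (auto simp: f_def)
      then show ?thesis by blast
    qed
    moreover have "\<Union>(f ` {lo+a..<lo+2*a}) \<subseteq> {lo..<lo+2*a}" by (auto simp: f_def)
    ultimately show ?thesis by blast
  qed
  finally show ?thesis .
qed

lemma odd_step:
  assumes "finite B" "B \<noteq> {}" "a \<notin> B"
  shows "bind_pmf (bernoulli_pmf (real (card B) / (real (card B) + 1))) (\<lambda>e. if e then pmf_of_set B else return_pmf a)
         = pmf_of_set (insert a B)"
proof (rule pmf_eqI)
  fix y
  have cB: "card B > 0" using assms by (simp add: card_gt_0_iff)
  have p0: "0 \<le> real (card B) / (real (card B) + 1)" "real (card B) / (real (card B) + 1) \<le> 1" by auto
  have ci: "card (insert a B) = card B + 1" using assms by simp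
  have hp: "(1::real) + (real (card B) * real (card B) + real (card B) * 2) \<noteq> 0"
    by (smt (verit) of_nat_0_le_iff mult_nonneg_nonneg)
  show "pmf (bind_pmf (bernoulli_pmf (real (card B) / (real (card B) + 1))) (\<lambda>e. if e then pmf_of_set B else return_pmf a)) y
        = pmf (pmf_of_set (insert a B)) y"
    using assms cB p0 ci hp
    by (auto simp: pmf_bind pmf_of_set pmf_return indicator_def field_simps)
qed

lemma walk_wl: "k \<ge> 1 \<Longrightarrow> walk (return_pmf (lo + k - 1)) (wl lo k) = pmf_of_set {lo..<lo+k}"
proof (induction k arbitrary: lo rule: less_induct)
  case (less k)
  show ?case
  proof (cases "k = 1")
    case True
    then show ?thesis by (simp add: wl.simps pmf_of_set_singleton)
  next
    case k1: False
    with less.prems have k2: "k \<ge> 2" by auto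
    show ?thesis
    proof (cases "even k")
      case True
      then obtain a where ka: "k = 2 * a" by blast
      with k2 have a1: "a \<ge> 1" by auto
      have w: "wl lo k = wl (lo + a) a @ [(swp lo a, 1/2)]"
        using k2 True ka by (subst wl.simps) simp
      have IH: "walk (return_pmf (lo + a + a - 1)) (wl (lo + a) a) = pmf_of_set {lo + a..<lo + a + a}"
        using less.IH[of a "lo + a"] a1 ka by simp
      have e1: "lo + k - 1 = lo + a + a - 1" "lo + a + a = lo + 2 * a" using ka by auto
      show ?thesis unfolding w walk_append e1(1) IH
        using even_step[OF a1, of lo] by (simp add: e1(2) ka)
    next
      case False
      define r where "r = wl lo (k - 1)"
      define p where "p = (real k - 1) / real k"
      have w: "wl lo k = (swp (lo + k - 2) 1, p) # r"
        using k2 False by (subst wl.simps) (simp add: r_def p_def)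
      have s1: "swp (lo + k - 2) 1 (lo + k - 1) = lo + k - 2" using k2 unfolding swp_def by auto
      have IH: "walk (return_pmf (lo + k - 2)) r = pmf_of_set {lo..<lo + k - 1}"
      proof -
        have "walk (return_pmf (lo + (k - 1) - 1)) (wl lo (k - 1)) = pmf_of_set {lo..<lo + (k - 1)}"
          using less.IH[of "k - 1" lo] k2 by simp
        moreover have "lo + (k - 1) - 1 = lo + k - 2" "lo + (k - 1) = lo + k - 1" using k2 by auto
        ultimately show ?thesis by (simp add: r_def)
      qed
      have fx: "walk (return_pmf (lo + k - 1)) r = return_pmf (lo + k - 1)"
      proof (rule walk_fix)
        show "\<forall>(t, p)\<in>set r. t (lo + k - 1) = lo + k - 1"
          using wl_props[of lo "k - 1"] k2 unfolding r_def by fastforce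
      qed
      have "walk (return_pmf (lo + k - 1)) (wl lo k)
          = bind_pmf (bernoulli_pmf p) (\<lambda>e. walk (return_pmf (if e then lo + k - 2 else lo + k - 1)) r)"
        unfolding w walk_Cons by (subst walk_bind) (simp add: bind_return_pmf bind_map_pmf o_def s1[simplified] cong: if_cong)
      also have "\<dots> = bind_pmf (bernoulli_pmf p) (\<lambda>e. if e then pmf_of_set {lo..<lo + k - 1} else return_pmf (lo + k - 1))"
        by (rule bind_pmf_cong) (auto simp: IH fx[simplified])
      also have "\<dots> = pmf_of_set (insert (lo + k - 1) {lo..<lo + k - 1})"
      proof -
        have c: "card {lo..<lo + k - 1} = k - 1" by simp
        have h: "p = real (card {lo..<lo + k - 1}) / (real (card {lo..<lo + k - 1}) + 1)"
          unfolding c p_def using k2 by (simp add: of_nat_diff)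
        show ?thesis unfolding h by (rule odd_step) (use k2 in auto)
      qed
      also have "insert (lo + k - 1) {lo..<lo + k - 1} = {lo..<lo + k}" using k2 by auto
      finally show ?thesis .
    qed
  qed
qed

abbreviation finv :: "(nat \<Rightarrow> nat) \<Rightarrow> nat \<Rightarrow> nat" where "finv \<equiv> inv_into UNIV"

lemma invol_permutes:
  assumes "t \<circ> t = id" "\<And>x. x \<notin> S \<Longrightarrow> t x = x"
  shows "t permutes S"
  unfolding permutes_def
proof (intro conjI allI impI)
  fix x assume "x \<notin> S" then show "t x = x" using assms(2) by blast
next
  fix y
  have tt: "t (t z) = z" for z using assms(1) by (metis comp_apply id_apply)
  show "\<exists>!x. t x = y"
  proof
    show "t (t y) = y" by (rule tt)
  next
    fix x assume "t x = y" then show "x = t y" using tt by metis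
  qed
qed

lemma rs0_perm:
  "(\<forall>h\<in>set_pmf M. h permutes S) \<Longrightarrow> (\<forall>(t,p)\<in>set s. t permutes S) \<Longrightarrow> \<forall>h\<in>set_pmf (rs0 M s). h permutes S"
proof (induction s arbitrary: M)
  case Nil
  then show ?case by simp
next
  case (Cons a s)
  obtain t p where a: "a = (t,p)" by fastforce
  have t: "t permutes S" using Cons.prems a by auto
  have "\<forall>h\<in>set_pmf (bind_pmf M (\<lambda>h. map_pmf (\<lambda>e. if e then h \<circ> t else h) (bernoulli_pmf p))). h permutes S"
    using Cons.prems(1) permutes_compose[OF t] by auto
  moreover have "\<forall>(t,p)\<in>set s. t permutes S" using Cons.prems(2) by auto
  ultimately show ?case unfolding a rs0_Cons by (rule Cons.IH)
qed

lemma rs0_inv: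
  "(\<forall>h\<in>set_pmf M. h permutes S) \<Longrightarrow> (\<forall>(t,p)\<in>set s. t permutes S \<and> t \<circ> t = id) \<Longrightarrow>
    map_pmf (\<lambda>h. finv h k) (rs0 M s) = walk (map_pmf (\<lambda>h. finv h k) M) s"
proof (induction s arbitrary: M)
  case Nil
  then show ?case by simp
next
  case (Cons a s)
  obtain t p where a: "a = (t,p)" by fastforce
  have "(t,p) \<in> set (a # s)" using a by simp
  with Cons.prems(2) have "case (t,p) of (t,p) \<Rightarrow> t permutes S \<and> t \<circ> t = id" by (rule bspec)
  then have t: "t permutes S" "t \<circ> t = id" by (simp_all only: case_prod_conv)
  have it: "finv t = t" by (rule inv_unique_comp[OF t(2) t(2)])
  define M' where "M' = bind_pmf M (\<lambda>h. map_pmf (\<lambda>e. if e then h \<circ> t else h) (bernoulli_pmf p))"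
  have M': "\<forall>h\<in>set_pmf M'. h permutes S"
    using Cons.prems(1) permutes_compose[OF t(1)] by (auto simp: M'_def)
  have "map_pmf (\<lambda>h. finv h k) M' = bind_pmf M (\<lambda>h. map_pmf (\<lambda>e. if e then t (finv h k) else finv h k) (bernoulli_pmf p))"
    unfolding M'_def map_bind_pmf
  proof (rule bind_pmf_cong[OF refl])
    fix h assume "h \<in> set_pmf M"
    then have "h permutes S" using Cons.prems(1) by auto
    then have "finv (h \<circ> t) = t \<circ> finv h"
      using o_inv_distrib[OF permutes_bij[OF \<open>h permutes S\<close>] permutes_bij[OF t(1)]] it by simp
    then show "map_pmf (\<lambda>h. finv h k) (map_pmf (\<lambda>e. if e then h \<circ> t else h) (bernoulli_pmf p)) =
          map_pmf (\<lambda>e. if e then t (finv h k) else finv h k) (bernoulli_pmf p)"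
      by (simp add: map_pmf_comp if_distrib cong: if_cong) (intro map_pmf_cong refl, simp)
  qed
  also have "\<dots> = bind_pmf (map_pmf (\<lambda>h. finv h k) M) (\<lambda>x. map_pmf (\<lambda>e. if e then t x else x) (bernoulli_pmf p))"
    by (simp add: bind_map_pmf)
  finally have eq: "map_pmf (\<lambda>h. finv h k) M' = bind_pmf (map_pmf (\<lambda>h. finv h k) M) (\<lambda>x. map_pmf (\<lambda>e. if e then t x else x) (bernoulli_pmf p))" .
  show ?case unfolding a rs0_Cons walk_Cons M'_def[symmetric] eq[symmetric]
    using Cons.IH[OF M'] Cons.prems(2) a by auto
qed

lemma rs0_split: "rs0 M s = bind_pmf M (\<lambda>h. map_pmf ((\<circ>) h) (rs0 (return_pmf id) s))"
proof (induction s arbitrary: M)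
  case Nil
  then show ?case by (simp add: bind_return_pmf' map_pmf_def[symmetric])
next
  case (Cons a s)
  obtain t p where a: "a = (t,p)" by fastforce
  define R where "R = rs0 (return_pmf id) s"
  have "rs0 M (a # s) = bind_pmf M (\<lambda>h. bind_pmf (bernoulli_pmf p) (\<lambda>e. map_pmf ((\<circ>) (if e then h \<circ> t else h)) R))"
    unfolding a rs0_Cons by (subst Cons.IH) (simp add: bind_assoc_pmf bind_map_pmf R_def)
  also have "\<dots> = bind_pmf M (\<lambda>h. map_pmf ((\<circ>) h) (rs0 (return_pmf id) (a # s)))"
    unfolding a rs0_Cons
    apply (subst Cons.IH)
    apply (simp add: bind_return_pmf bind_map_pmf map_bind_pmf map_pmf_comp R_def)
    apply (intro bind_pmf_cong refl map_pmf_cong)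
    apply (auto simp: o_assoc)
    done
  finally show ?case .
qed

lemma coset_eq:
  assumes y: "y permutes {1..Suc m}" and yj: "y j = Suc m"
  shows "(\<lambda>h. h \<circ> y) ` {h. h permutes {1..m}} = {\<sigma>. \<sigma> permutes {1..Suc m} \<and> \<sigma> j = Suc m}"
proof (intro equalityI subsetI)
  fix \<sigma> assume "\<sigma> \<in> (\<lambda>h. h \<circ> y) ` {h. h permutes {1..m}}"
  then obtain h where h: "h permutes {1..m}" and s: "\<sigma> = h \<circ> y" by blast
  have h': "h permutes {1..Suc m}" by (rule permutes_subset[OF h]) auto
  have "\<sigma> permutes {1..Suc m}" unfolding s by (rule permutes_compose[OF y h'])
  moreover have "\<sigma> j = Suc m" unfolding s using yj permutes_not_in[OF h, of "Suc m"] by simp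
  ultimately show "\<sigma> \<in> {\<sigma>. \<sigma> permutes {1..Suc m} \<and> \<sigma> j = Suc m}" by blast
next
  fix \<sigma> assume "\<sigma> \<in> {\<sigma>. \<sigma> permutes {1..Suc m} \<and> \<sigma> j = Suc m}"
  then have s: "\<sigma> permutes {1..Suc m}" and sj: "\<sigma> j = Suc m" by auto
  define h where "h = \<sigma> \<circ> finv y"
  have h1: "h permutes {1..Suc m}" unfolding h_def by (rule permutes_compose[OF permutes_inv[OF y] s])
  have iy: "finv y (Suc m) = j" using permutes_inv_eq[OF y] yj by blast
  have "h (Suc m) = Suc m" unfolding h_def using iy sj by simp
  then have "h permutes {1..m}"
  proof (intro permutes_superset[OF h1])
    fix x assume "h (Suc m) = Suc m" "x \<in> {1..Suc m} - {1..m}"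
    then show "h x = x" by (metis DiffE atLeastAtMost_iff le_SucE)
  qed
  moreover have "\<sigma> = h \<circ> y" unfolding h_def by (simp add: comp_assoc permutes_inv_o(2)[OF y])
  ultimately show "\<sigma> \<in> (\<lambda>h. h \<circ> y) ` {h. h permutes {1..m}}" by blast
qed

lemma inj_comp_right:
  fixes y :: "nat \<Rightarrow> nat"
  assumes y: "y permutes S"
  shows "inj_on (\<lambda>h. h \<circ> y) A"
proof (rule inj_onI)
  fix h h' assume "h \<circ> y = h' \<circ> y"
  then have "h \<circ> y \<circ> finv y = h' \<circ> y \<circ> finv y" by simp
  then show "h = h'" by (simp add: comp_assoc permutes_inv_o(1)[OF y])
qed

fun sq :: "nat \<Rightarrow> ((nat \<Rightarrow> nat) \<times> real) list" where
  "sq 0 = []"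
| "sq (Suc m) = sq m @ wl 1 (Suc m)"

definition good :: "nat \<Rightarrow> (nat \<Rightarrow> nat) \<times> real \<Rightarrow> bool" where
  "good n tp \<longleftrightarrow> fst tp permutes {1..n} \<and> fst tp \<circ> fst tp = id \<and> fst tp \<noteq> id \<and> 0 \<le> snd tp \<and> snd tp \<le> 1"

lemma good_mono: "good m tp \<Longrightarrow> m \<le> n \<Longrightarrow> good n tp"
  unfolding good_def using permutes_subset[of "fst tp" "{1..m}" "{1..n}"] by auto

lemma notin_range: "(x::nat) \<notin> {1..Suc m} \<Longrightarrow> x < 1 \<or> 1 + Suc m \<le> x" by auto

lemma ball_pair: "\<forall>(x,y)\<in>A. P x y \<Longrightarrow> (a,b) \<in> A \<Longrightarrow> P a b" by auto

lemma wl_good: "tp \<in> set (wl 1 (Suc m)) \<Longrightarrow> good (Suc m) tp"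
proof -
  assume a: "tp \<in> set (wl 1 (Suc m))"
  obtain t p where tp_eq: "tp = (t, p)" by (cases tp) blast
  have tp_all: "t \<circ> t = id \<and> t \<noteq> id \<and> (\<forall>u. u < 1 \<or> 1 + Suc m \<le> u \<longrightarrow> t u = u) \<and> 0 \<le> p \<and> p \<le> 1"
    by (rule ball_pair[OF wl_props[of 1 "Suc m"] a[unfolded tp_eq]])
  note tp = tp_all[THEN conjunct1] tp_all[THEN conjunct2, THEN conjunct1]
     tp_all[THEN conjunct2, THEN conjunct2, THEN conjunct1]
     tp_all[THEN conjunct2, THEN conjunct2, THEN conjunct2, THEN conjunct1]
     tp_all[THEN conjunct2, THEN conjunct2, THEN conjunct2, THEN conjunct2]
  have "t permutes {1..Suc m}"
  proof (rule invol_permutes)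
    show "t \<circ> t = id" by (rule tp(1))
  next
    fix x assume "x \<notin> {1..Suc m}"
    then have "x < 1 \<or> 1 + Suc m \<le> x" by (rule notin_range)
    then show "t x = x" by (rule tp(3)[rule_format])
  qed
  then show ?thesis unfolding good_def tp_eq fst_conv snd_conv using tp(1,2,4,5) by (intro conjI)
qed

lemma sq_good: "tp \<in> set (sq n) \<Longrightarrow> good n tp"
proof (induction n arbitrary: tp)
  case 0
  then show ?case by simp
next
  case (Suc m)
  then have "tp \<in> set (sq m) \<or> tp \<in> set (wl 1 (Suc m))" by simp
  then show ?case
  proof
    assume "tp \<in> set (sq m)"
    then have "good m tp" by (rule Suc.IH)
    then show ?thesis by (rule good_mono) simp
  next
    assume "tp \<in> set (wl 1 (Suc m))"
    then show ?thesis by (rule wl_good)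
  qed
qed

lemma C_card:
  assumes j: "j \<in> {1..Suc m}"
  shows "card {\<sigma>. \<sigma> permutes {1..Suc m} \<and> \<sigma> j = Suc m} = card {h. h permutes {1..m}}"
proof -
  have y: "Transposition.transpose j (Suc m) permutes {1..Suc m}" using j by (intro permutes_swap_id) auto
  have "{\<sigma>. \<sigma> permutes {1..Suc m} \<and> \<sigma> j = Suc m} = (\<lambda>h. h \<circ> Transposition.transpose j (Suc m)) ` {h. h permutes {1..m}}"
    by (rule coset_eq[OF y, symmetric]) simp
  also have "card \<dots> = card {h. h permutes {1..m}}"
    by (rule card_image[OF inj_comp_right[OF y]])
  finally show ?thesis .
qed

lemma C_union:
  "(\<Union>j\<in>{1..Suc m}. {\<sigma>. \<sigma> permutes {1..Suc m} \<and> \<sigma> j = Suc m}) = {\<sigma>. \<sigma> permutes {1..Suc m}}"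
proof (intro equalityI subsetI)
  fix \<sigma> assume "\<sigma> \<in> (\<Union>j\<in>{1..Suc m}. {\<sigma>. \<sigma> permutes {1..Suc m} \<and> \<sigma> j = Suc m})"
  then show "\<sigma> \<in> {\<sigma>. \<sigma> permutes {1..Suc m}}" by simp
next
  fix \<sigma> assume "\<sigma> \<in> {\<sigma>. \<sigma> permutes {1..Suc m}}"
  then have s: "\<sigma> permutes {1..Suc m}" by simp
  define j where "j = finv \<sigma> (Suc m)"
  have "j \<in> {1..Suc m}" unfolding j_def permutes_in_image[OF permutes_inv[OF s]] by simp
  moreover have "\<sigma> j = Suc m" unfolding j_def by (rule permutes_inverses(1)[OF s])
  ultimately show "\<sigma> \<in> (\<Union>j\<in>{1..Suc m}. {\<sigma>. \<sigma> permutes {1..Suc m} \<and> \<sigma> j = Suc m})"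
    using s by (intro UN_I[of j]) simp_all
qed

lemma C_disj: "disjoint_family_on (\<lambda>j. {\<sigma>. \<sigma> permutes {1..Suc m} \<and> \<sigma> j = Suc m}) (A :: nat set)"
  unfolding disjoint_family_on_def
proof (intro ballI impI)
  fix j j' :: nat assume "j \<noteq> j'"
  show "{\<sigma>. \<sigma> permutes {1..Suc m} \<and> \<sigma> j = Suc m} \<inter> {\<sigma>. \<sigma> permutes {1..Suc m} \<and> \<sigma> j' = Suc m} = {}"
  proof (rule ccontr)
    assume "{\<sigma>. \<sigma> permutes {1..Suc m} \<and> \<sigma> j = Suc m} \<inter> {\<sigma>. \<sigma> permutes {1..Suc m} \<and> \<sigma> j' = Suc m} \<noteq> {}"
    then obtain \<sigma> where s: "\<sigma> permutes {1..Suc m}" "\<sigma> j = Suc m" "\<sigma> j' = Suc m" by blast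
    then have "\<sigma> j = \<sigma> j'" by simp
    then have "j = j'" using permutes_inj[OF s(1)] by (simp add: inj_eq)
    then show False using \<open>j \<noteq> j'\<close> by simp
  qed
qed

lemma sq_dist: "n \<ge> 1 \<Longrightarrow> rs0 (return_pmf id) (sq n) = pmf_of_set {h. h permutes {1..n}}"
proof (induction n)
  case 0
  then show ?case by simp
next
  case (Suc m)
  show ?case
  proof (cases "m = 0")
    case True
    have "sq (Suc m) = []" using True by (simp add: wl.simps)
    moreover have "{h. h permutes {1..Suc m}} = {id}" using True by simp
    ultimately show ?thesis by (metis rs0_Nil pmf_of_set_singleton)
  next
    case False
    then have m1: "m \<ge> 1" by simp
    define H where "H = {h. h permutes {1..m}}"
    define W where "W = wl 1 (Suc m)"
    define Y where "Y = rs0 (return_pmf id) W"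
    define C where "C j = {\<sigma>. \<sigma> permutes {1..Suc m} \<and> \<sigma> j = Suc m}" for j
    have "id \<in> H" unfolding H_def by simp
    have Hf: "finite H" unfolding H_def by (rule finite_permutations) simp
    have Hne: "H \<noteq> {}" using \<open>id \<in> H\<close> by force
    note Hfin = Hf Hne
    have Wperm: "\<forall>(t,p)\<in>set W. t permutes {1..Suc m} \<and> t \<circ> t = id"
    proof (intro ballI, clarify)
      fix t p assume "(t, p) \<in> set W"
      then have "good (Suc m) (t, p)" unfolding W_def by (rule wl_good)
      then show "t permutes {1..Suc m} \<and> t \<circ> t = id" unfolding good_def by simp
    qed
    have Yperm: "\<forall>y\<in>set_pmf Y. y permutes {1..Suc m}"
      unfolding Y_def by (rule rs0_perm) (use Wperm in auto)
    have "map_pmf (\<lambda>y. finv y (Suc m)) Y = walk (map_pmf (\<lambda>y. finv y (Suc m)) (return_pmf id)) W"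
      unfolding Y_def by (rule rs0_inv) (use Wperm in auto)
    also have "\<dots> = walk (return_pmf (1 + Suc m - 1)) (wl 1 (Suc m))" by (simp add: W_def inv_id)
    also have "\<dots> = pmf_of_set {1..<1 + Suc m}" by (rule walk_wl) simp
    also have "{1..<1 + Suc m} = {1..Suc m}" by auto
    finally have Ywalk: "map_pmf (\<lambda>y. finv y (Suc m)) Y = pmf_of_set {1..Suc m}" .
    have "rs0 (return_pmf id) (sq (Suc m)) = rs0 (pmf_of_set H) W"
      using Suc.IH[OF m1] by (simp only: sq.simps rs0_append H_def W_def)
    also have "\<dots> = bind_pmf (pmf_of_set H) (\<lambda>h. map_pmf ((\<circ>) h) Y)"
      unfolding Y_def by (rule rs0_split)
    also have "\<dots> = bind_pmf Y (\<lambda>y. map_pmf (\<lambda>h. h \<circ> y) (pmf_of_set H))"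
      unfolding map_pmf_def by (rule bind_commute_pmf)
    also have "\<dots> = bind_pmf Y (\<lambda>y. pmf_of_set (C (finv y (Suc m))))"
    proof (rule bind_pmf_cong[OF refl])
      fix y assume "y \<in> set_pmf Y"
      then have y: "y permutes {1..Suc m}" using Yperm by simp
      have "map_pmf (\<lambda>h. h \<circ> y) (pmf_of_set H) = pmf_of_set ((\<lambda>h. h \<circ> y) ` H)"
        by (rule map_pmf_of_set_inj[OF inj_comp_right[OF y] Hfin(2) Hfin(1)])
      also have "(\<lambda>h. h \<circ> y) ` H = C (finv y (Suc m))"
        unfolding H_def C_def by (rule coset_eq[OF y permutes_inverses(1)[OF y]])
      finally show "map_pmf (\<lambda>h. h \<circ> y) (pmf_of_set H) = pmf_of_set (C (finv y (Suc m)))" .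
    qed
    also have "\<dots> = bind_pmf (map_pmf (\<lambda>y. finv y (Suc m)) Y) (\<lambda>j. pmf_of_set (C j))"
      by (simp add: bind_map_pmf)
    also have "\<dots> = bind_pmf (pmf_of_set {1..Suc m}) (\<lambda>j. pmf_of_set (C j))"
      by (simp only: Ywalk)
    also have "\<dots> = pmf_of_set (\<Union>(C ` {1..Suc m}))"
    proof (rule pmf_of_set_UN[symmetric, where n = "card H"])
      show "finite (\<Union>(C ` {1..Suc m}))"
        unfolding C_def C_union using finite_permutations[of "{1..Suc m}"] by simp
      show "{1..Suc m} \<noteq> {}" by simp
      show "C x \<noteq> {}" if "x \<in> {1..Suc m}" for x
      proof -
        have "card (C x) = card H" unfolding C_def H_def by (rule C_card[OF that])
        moreover have "card H > 0" using Hfin by (simp add: card_gt_0_iff)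
        ultimately show ?thesis by auto
      qed
      show "card (C x) = card H" if "x \<in> {1..Suc m}" for x
        unfolding C_def H_def by (rule C_card[OF that])
      show "disjoint_family_on C {1..Suc m}" unfolding C_def by (rule C_disj)
    qed
    also have "\<Union>(C ` {1..Suc m}) = {h. h permutes {1..Suc m}}" unfolding C_def by (rule C_union)
    finally show ?thesis .
  qed
qed



lemma cb1: "4^m * (fact m)^2 \<le> (fact (2*m+1) :: nat)"
proof (induction m)
  case 0
  then show ?case by simp
next
  case (Suc m)
  have e1: "(4::nat)^(Suc m) * (fact (Suc m))^2 = (4 * (Suc m)^2) * (4^m * (fact m)^2)"
    by (simp add: power2_eq_square algebra_simps)
  have e2: "(fact (2 * Suc m + 1) :: nat) = ((2*m+3) * (2*m+2)) * fact (2*m+1)"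
    by (simp add: algebra_simps)
  have "4 * (Suc m)^2 \<le> (2*m+3) * (2*m+2)" by (simp add: power2_eq_square algebra_simps)
  then show ?case unfolding e1 e2 using Suc.IH by (rule mult_mono) simp_all
qed

lemma cb2: "m \<ge> 1 \<Longrightarrow> (4^m * (fact m)^2)^2 \<le> 4 * m * (fact (2*m) :: nat)^2"
proof (induction m rule: dec_induct)
  case base
  then show ?case by (simp add: numeral_eq_Suc)
next
  case (step m)
  define A where "A = ((4::nat)^m * (fact m)^2)^2"
  define B where "B = (fact (2*m) :: nat)^2"
  have e1: "((4::nat)^(Suc m) * (fact (Suc m))^2)^2 = (16 * (Suc m)^4) * A"
    by (simp add: A_def power2_eq_square algebra_simps power4_eq_xxxx)
  have e2: "4 * Suc m * (fact (2 * Suc m) :: nat)^2 = (4 * Suc m * ((2*m+2)*(2*m+1))^2) * B"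
    by (simp add: B_def power2_eq_square algebra_simps)
  have "(16 * (Suc m)^4) * A \<le> (16 * (Suc m)^4) * (4 * m * B)"
    using step.IH by (simp add: A_def B_def)
  also have "\<dots> = (16 * (Suc m)^4 * 4 * m) * B" by (simp add: algebra_simps)
  also have "\<dots> \<le> (4 * Suc m * ((2*m+2)*(2*m+1))^2) * B"
  proof (rule mult_right_mono)
    have "4 * Suc m * ((2*m+2)*(2*m+1))^2 = 16 * (Suc m)^4 * 4 * m + 16 * (Suc m)^3"
      by (simp add: power2_eq_square power3_eq_cube power4_eq_xxxx algebra_simps)
    then show "16 * (Suc m)^4 * 4 * m \<le> 4 * Suc m * ((2*m+2)*(2*m+1))^2" by simp
  qed simp
  finally show ?case unfolding e1 e2 .
qed

function cc :: "nat \<Rightarrow> nat" where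
  "cc k = (if k \<le> 1 then 0 else if even k then cc (k div 2) + 1 else cc (k - 1) + 1)"
  by pat_completeness auto
termination by (relation "Wellfounded.measure id") auto

declare cc.simps[simp del]

lemma cc_1: "cc 1 = 0" by (subst cc.simps) simp
lemma cc_Suc0: "cc (Suc 0) = 0" by (subst cc.simps) simp
lemma cc_even: "a \<ge> 1 \<Longrightarrow> cc (2*a) = cc a + 1" by (subst cc.simps) simp
lemma cc_odd: "a \<ge> 1 \<Longrightarrow> cc (2*a+1) = cc a + 2"
proof -
  assume a: "a \<ge> 1"
  have "cc (2*a+1) = cc (2*a) + 1" using a by (subst cc.simps) simp
  then show ?thesis using cc_even[OF a] by simp
qed

lemma cc_bound: "k \<ge> 1 \<Longrightarrow> k < 2^(cc k + 1)"
proof (induction k rule: less_induct)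
  case (less k)
  show ?case
  proof (cases "k = 1")
    case True then show ?thesis by (simp add: cc_1 cc_Suc0)
  next
    case False
    then have k2: "k \<ge> 2" using less.prems by simp
    show ?thesis
    proof (cases "even k")
      case True
      then obtain a where ka: "k = 2*a" by blast
      with k2 have a1: "a \<ge> 1" by simp
      have "a < 2^(cc a + 1)" using less.IH[of a] ka a1 by simp
      then show ?thesis unfolding ka cc_even[OF a1] by simp
    next
      case False
      then obtain a where ka: "k = 2*a+1" using oddE by blast
      with k2 have a1: "a \<ge> 1" by simp
      have "a < 2^(cc a + 1)" using less.IH[of a] ka a1 by simp
      then show ?thesis unfolding ka cc_odd[OF a1] by simp
    qed
  qed
qed

definition SS :: "nat \<Rightarrow> nat" where "SS n = (\<Sum>k=1..n. cc k)"

lemma SS_odd: "SS (2*m+1) = 2 * SS m + 3 * m"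
proof (induction m)
  case 0
  then show ?case by (simp add: SS_def cc_1 cc_Suc0)
next
  case (Suc m)
  have "SS (2 * Suc m + 1) = SS (2*m+1) + cc (2*(m+1)) + cc (2*(m+1)+1)"
    by (simp add: SS_def add.commute)
  also have "\<dots> = 2 * SS m + 3 * m + 2 * cc (m + 1) + 3"
    using Suc.IH cc_even[of "m+1"] cc_odd[of "m+1"] by simp
  also have "\<dots> = 2 * SS (Suc m) + 3 * Suc m" by (simp add: SS_def)
  finally show ?case .
qed

lemma SS_even: "m \<ge> 1 \<Longrightarrow> SS (2*m) + cc m + 2 = 2 * SS m + 3 * m"
proof -
  assume m: "m \<ge> 1"
  have "SS (2*m+1) = SS (2*m) + cc (2*m+1)" by (simp add: SS_def)
  then show ?thesis using SS_odd[of m] cc_odd[OF m] by simp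
qed

lemma log2_4: "log 2 (4::real) = 2"
proof -
  have "log 2 ((2::real)^2) = real 2 * log 2 2" by (rule log_nat_power) simp
  moreover have "(2::real)^2 = 4" by simp
  ultimately show ?thesis by simp
qed

lemma logfact_odd: "log 2 (fact (2*m+1)) \<ge> 2 * log 2 (fact m) + 2 * m"
proof -
  have "real (4^m * (fact m)^2) \<le> real (fact (2*m+1))" using cb1[of m] by linarith
  then have le: "4^m * (fact m)^2 \<le> (fact (2*m+1) :: real)"
    by (simp only: of_nat_mult of_nat_power of_nat_fact of_nat_numeral)
  have "log 2 (4^m * (fact m)^2) = m * log 2 4 + 2 * log 2 (fact m)"
    by (simp add: log_mult log_nat_power)
  also have "log 2 (4::real) = 2"
    by (rule log2_4)
  finally have e: "log 2 (4^m * (fact m)^2) = 2 * m + 2 * log 2 (fact m)" by simp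
  have "log 2 (4^m * (fact m)^2) \<le> log 2 (fact (2*m+1) :: real)"
    using le by (subst log_le_cancel_iff) auto
  then show ?thesis using e by simp
qed

lemma logfact_even: "m \<ge> 1 \<Longrightarrow> 2 * log 2 (fact (2*m)) + 2 + log 2 m \<ge> 4 * log 2 (fact m) + 4 * m"
proof -
  assume m: "m \<ge> 1"
  have "real ((4^m * (fact m)^2)^2) \<le> real (4 * m * (fact (2*m))^2)" using cb2[OF m] by linarith
  then have le: "(4^m * (fact m)^2)^2 \<le> (4 * m * (fact (2*m))^2 :: real)"
    by (simp only: of_nat_mult of_nat_power of_nat_fact of_nat_numeral)
  have l4: "log 2 (4::real) = 2"
    by (rule log2_4)
  have "log 2 ((4^m * (fact m)^2)^2) = 2 * (m * log 2 4 + 2 * log 2 (fact m))"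
    by (simp add: log_mult log_nat_power)
  then have e1: "log 2 (((4::real)^m * (fact m)^2)^2) = 4 * m + 4 * log 2 (fact m)" using l4 by simp
  have "log 2 (4 * m * (fact (2*m))^2) = log 2 4 + log 2 m + 2 * log 2 (fact (2*m))"
    using m by (simp add: log_mult log_nat_power)
  then have e2: "log 2 (4 * m * (fact (2*m))^2 :: real) = 2 + log 2 m + 2 * log 2 (fact (2*m))" using l4 by simp
  have "log 2 (((4::real)^m * (fact m)^2)^2) \<le> log 2 (4 * m * (fact (2*m))^2 :: real)"
    using le m by (subst log_le_cancel_iff) auto
  then show ?thesis using e1 e2 by simp
qed

lemma log_cc: "m \<ge> 1 \<Longrightarrow> log 2 (real m) < real (cc m) + 1"
proof -
  assume m: "m \<ge> 1"
  have "real m < real (2^(cc m + 1))" using cc_bound[OF m] by linarith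
  moreover have "(2::real) powr real (cc m + 1) = 2^(cc m + 1)" by (rule powr_realpow) simp
  ultimately have "real m < 2 powr (real (cc m + 1))" by simp
  then show ?thesis using m by (subst log_less_iff) (auto simp: add.commute)
qed

lemma SS_bound: "n \<ge> 2 \<Longrightarrow> 2 * real (SS n) + 3 \<le> real n + 3 * log 2 (fact n)"
proof (induction n rule: less_induct)
  case (less n)
  show ?case
  proof (cases "n \<le> 3")
    case True
    then have "n = 2 \<or> n = 3" using less.prems by auto
    then show ?thesis
    proof
      assume n: "n = 2"
      have "SS 1 = 0" by (simp add: SS_def cc_Suc0)
      then have "SS 2 = 1" using SS_even[of 1] cc_1 by simp
      then show ?thesis using n by simp
    next
      assume n: "n = 3"
      have "SS 1 = 0" by (simp add: SS_def cc_Suc0)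
      then have "SS 3 = 3" using SS_odd[of 1] by simp
      moreover have "log 2 (6::real) \<ge> 2"
      proof -
        have "log 2 (4::real) = 2"
          by (rule log2_4)
        moreover have "log 2 (4::real) \<le> log 2 6" by simp
        ultimately show ?thesis by simp
      qed
      moreover have "(fact 3 :: real) = 6" by (simp add: numeral_eq_Suc)
      ultimately show ?thesis using n by simp
    qed
  next
    case False
    then have n4: "n \<ge> 4" by simp
    show ?thesis
    proof (cases "even n")
      case True
      then obtain m where nm: "n = 2*m" by blast
      with n4 have m2: "m \<ge> 2" by simp
      have IH: "2 * real (SS m) + 3 \<le> real m + 3 * log 2 (fact m)" using less.IH[of m] nm m2 by simp
      have E: "real (SS (2*m)) + real (cc m) + 2 = 2 * real (SS m) + 3 * real m"
      proof -
        have "real (SS (2*m) + cc m + 2) = real (2 * SS m + 3 * m)" using SS_even[of m] m2 by simp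
        then show ?thesis by (simp only: of_nat_add of_nat_mult of_nat_numeral)
      qed
      have L: "2 * log 2 (fact (2*m)) + 2 + log 2 m \<ge> 4 * log 2 (fact m) + 4 * m"
        using logfact_even[of m] m2 by simp
      have C: "log 2 (real m) < real (cc m) + 1" using log_cc[of m] m2 by simp
      have r: "real (2*m) = 2 * real m" by simp
      have c0: "real (cc m) \<ge> 0" by simp
      show ?thesis unfolding nm r using IH E L C c0 by linarith
    next
      case False
      then obtain m where nm: "n = 2*m+1" using oddE by blast
      with n4 have m2: "m \<ge> 2" by simp
      have IH: "2 * real (SS m) + 3 \<le> real m + 3 * log 2 (fact m)" using less.IH[of m] nm m2 by simp
      have E: "real (SS (2*m+1)) = 2 * real (SS m) + 3 * real m"
        using SS_odd[of m] by simp
      have L: "log 2 (fact (2*m+1)) \<ge> 2 * log 2 (fact m) + 2 * m"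
        using logfact_odd[of m] by simp
      have r: "real (2*m+1) = 2 * real m + 1" by simp
      show ?thesis unfolding nm r using IH E L by linarith
    qed
  qed
qed


lemma length_wl: "length (wl lo k) = cc k"
proof (induction lo k rule: wl.induct)
  case (1 lo k)
  show ?case
  proof (cases "k \<le> 1")
    case True
    then show ?thesis by (simp add: wl.simps cc.simps)
  next
    case False
    show ?thesis
    proof (cases "even k")
      case True
      then show ?thesis using 1 False by (subst wl.simps, subst cc.simps) simp
    next
      case odd: False
      then show ?thesis using 1 False by (subst wl.simps, subst cc.simps) simp
    qed
  qed
qed

lemma length_sq: "length (sq n) = SS n"
proof (induction n)
  case 0
  then show ?case by (simp add: SS_def)
next
  case (Suc m)
  then show ?case by (simp add: length_wl SS_def)
qed

lemma len_bound: "n \<ge> 1 \<Longrightarrow> real (SS n) \<le> 3/2 * real_of_int \<lfloor>log 2 (real (fact n))\<rfloor> + real n / 2"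
proof -
  assume n: "n \<ge> 1"
  show ?thesis
  proof (cases "n = 1")
    case True
    have "SS 1 = 0" by (simp add: SS_def cc_Suc0)
    then show ?thesis using True by simp
  next
    case False
    then have n2: "n \<ge> 2" using n by simp
    have B: "2 * real (SS n) + 3 \<le> real n + 3 * log 2 (fact n)" by (rule SS_bound[OF n2])
    have F: "log 2 (real (fact n)) < real_of_int \<lfloor>log 2 (real (fact n))\<rfloor> + 1"
      using floor_correct[of "log 2 (real (fact n))"] by simp
    have e: "real (fact n) = (fact n :: real)" by (rule of_nat_fact)
    show ?thesis using B F unfolding e by linarith
  qed
qed

theorem mainTheorem3:
  fixes n :: nat
  assumes "n \<ge> 1"
  shows "(\<exists>s. mixing_seq (sym_group n) s \<and> (\<forall>(g, p) \<in> set s. involution (sym_group n) g) \<and>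
            real (length s) \<le> 3/2 * real_of_int \<lfloor>log 2 (real (fact n))\<rfloor> + real n / 2)
       \<and> real (mixlen (sym_group n)) \<le> 3/2 * real_of_int \<lfloor>log 2 (real (fact n))\<rfloor> + real n / 2"
proof -
  define s where "s = sq n"
  have gd: "good n tp" if "tp \<in> set s" for tp using that unfolding s_def by (rule sq_good)
  have carr: "carrier (sym_group n) = {h. h permutes {1..n}}" by (simp add: sym_group_def)
  have mix: "mixing_seq (sym_group n) s"
    unfolding mixing_seq_def
  proof (intro conjI ballI)
    fix x assume "x \<in> set s"
    then have "good n x" by (rule gd)
    then show "case x of (g, p) \<Rightarrow> g \<in> carrier (sym_group n) \<and> 0 \<le> p \<and> p \<le> 1"
      unfolding good_def carr by (cases x) simp
  next
    show "random_subproduct (sym_group n) s = pmf_of_set (carrier (sym_group n))"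
      unfolding rsp_sym carr s_def by (rule sq_dist[OF assms])
  qed
  have inv: "\<forall>(g, p) \<in> set s. involution (sym_group n) g"
  proof (intro ballI)
    fix x assume "x \<in> set s"
    then have "good n x" by (rule gd)
    then show "case x of (g, p) \<Rightarrow> involution (sym_group n) g"
      unfolding good_def involution_def carr sym_group_mult sym_group_one by (cases x) simp
  qed
  have len: "real (length s) \<le> 3/2 * real_of_int \<lfloor>log 2 (real (fact n))\<rfloor> + real n / 2"
    unfolding s_def length_sq by (rule len_bound[OF assms])
  have "mixlen (sym_group n) \<le> length s"
    unfolding mixlen_def by (rule Least_le) (use mix in blast)
  then have "real (mixlen (sym_group n)) \<le> real (length s)" by simp
  with len have "real (mixlen (sym_group n)) \<le> 3/2 * real_of_int \<lfloor>log 2 (real (fact n))\<rfloor> + real n / 2"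
    by linarith
  with mix inv len show ?thesis by blast
qed

end
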